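(* Let $M>0$, $\beta^*>0$, $0<I_0<M$ and $0<S_0<M$ with $S_0+I_0=M$. Let $g$ be the log-normal density \[ g(t)=\frac{1}{t\sigma\sqrt{2\pi}}\exp\!\left(-\frac{(\ln t-\mu)^2}{2\sigma^2}\right)\ (t>0),\qquad g(t)=0\ (t\le 0), \] with $\mu\in\mathbb{R}$, $\sigma>0$. Then the system \[ I'(t)=\beta^*(M-I(t))\Big(I(t)-\int_0^t g(t-s)I(s)\,ds\Big),\qquad S'(t)=-\beta^* S(t)\Big(I(t)-\int_0^t g(t-s)I(s)\,ds\Big), \] with $S(0)=S_0$, $I(0)=I_0$, has a unique $C^1$ solution $(S,I)$ on $[0,\infty)$. Moreover $0<S(t)<M$ and $0<I(t)<M$ for all $t\ge 0$, $S(t)$ decreases to a limit $S_\infty>0$, and $I(t)$ increases to a limit $I_\infty<M$.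
   Context: $M$ denotes the total (constant) population; $\beta^*=\beta/M$ with $0<\beta<1$. *)

theory Defs
  imports "HOL-Analysis.Analysis"
begin

definition lognormal_density :: "real \<Rightarrow> real \<Rightarrow> real \<Rightarrow> real" where
  "lognormal_density \<mu> \<sigma> t =
     (if t > 0 then (1 / (t * \<sigma> * sqrt (2 * pi))) * exp (- ((ln t - \<mu>)^2) / (2 * \<sigma>^2))
      else 0)"

definition force :: "(real \<Rightarrow> real) \<Rightarrow> (real \<Rightarrow> real) \<Rightarrow> real \<Rightarrow> real" where
  "force g I t = I t - integral {0..t} (\<lambda>s. g (t - s) * I s)"

definition is_C1_solution ::
  "real \<Rightarrow> real \<Rightarrow> (real \<Rightarrow> real) \<Rightarrow> real \<Rightarrow> real \<Rightarrow> (real \<Rightarrow> real) \<Rightarrow> (real \<Rightarrow> real) \<Rightarrow> bool" where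
  "is_C1_solution M b g S0 I0 S I \<longleftrightarrow>
     S 0 = S0 \<and> I 0 = I0 \<and>
     (\<exists>S' I'. continuous_on {0..} S' \<and> continuous_on {0..} I' \<and>
        (\<forall>t\<ge>0. (S has_real_derivative S' t) (at t within {0..}) \<and>
                (I has_real_derivative I' t) (at t within {0..}) \<and>
                I' t = b * (M - I t) * force g I t \<and>
                S' t = - b * S t * force g I t))"

end

theory Submission
  imports Defs "HOL-Probability.Distributions"
begin

lemmas hk_nonneg = Henstock_Kurzweil_Integration.integral_nonneg
lemmas hk_combine = Henstock_Kurzweil_Integration.integral_combine

locale LN = fixes mu sig :: real assumes sig_pos: "sig > 0"
begin

abbreviation "g \<equiv> lognormal_density mu sig"

lemma g_nonneg: "0 \<le> g t"
  using sig_pos by (auto simp: lognormal_density_def)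

lemma g_pos: "t > 0 \<Longrightarrow> 0 < g t"
  using sig_pos by (auto simp: lognormal_density_def)

lemma g_neg: "t \<le> 0 \<Longrightarrow> g t = 0"
  by (auto simp: lognormal_density_def)

lemma quad_bound: "k * y - (y - mu)^2/(2* sig^2) \<le> k*mu + k^2* sig^2/2"
proof -
  have s2: "2* sig^2 > 0" using sig_pos by simp
  have "(k*mu + k^2* sig^2/2) - (k * y - (y - mu)^2/(2* sig^2)) = (y - mu - k* sig^2)^2/(2* sig^2)"
    using s2 sig_pos by (simp add: divide_simps power2_eq_square) (simp add: algebra_simps)
  also have "\<dots> \<ge> 0" using s2 by simp
  finally show ?thesis by simp
qed

lemma g_powr_bound:
  assumes "t > 0"
  shows "t powr a * g t \<le> exp((a-1)*mu + (a-1)^2* sig^2/2) / (sig * sqrt(2*pi))"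
proof -
  have e1: "1 / t = exp (- ln t)" using assms by (simp add: exp_minus inverse_eq_divide)
  have "t powr a * g t = exp (a * ln t) * exp (- ln t) * exp (- ((ln t - mu)^2) / (2 * sig^2)) / (sig * sqrt(2*pi))"
    using assms sig_pos by (simp add: lognormal_density_def powr_def e1[symmetric] field_simps)
  also have "\<dots> = exp ((a-1) * ln t - (ln t - mu)^2 / (2 * sig^2)) / (sig * sqrt(2*pi))"
    by (simp add: exp_add[symmetric] exp_diff algebra_simps)
  also have "\<dots> \<le> exp((a-1)*mu + (a-1)^2* sig^2/2) / (sig * sqrt(2*pi))"
    using sig_pos quad_bound[of "a-1" "ln t"] by (intro divide_right_mono) auto
  finally show ?thesis .
qed

definition "C0 = exp((0-1)*mu + (0-1)^2* sig^2/2) / (sig * sqrt(2*pi))"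
definition "C1 = exp((-1-1)*mu + (-1-1)^2* sig^2/2) / (sig * sqrt(2*pi))"
definition "C3 = exp((3-1)*mu + (3-1)^2* sig^2/2) / (sig * sqrt(2*pi))"

lemma C_pos: "C0 > 0" "C1 > 0" "C3 > 0"
  using sig_pos by (auto simp: C0_def C1_def C3_def)

lemma g_le_C0: "g t \<le> C0"
proof (cases "t > 0")
  case True thus ?thesis using g_powr_bound[OF True, of 0] by (simp add: C0_def)
next
  case False thus ?thesis using g_neg C_pos by simp
qed

lemma g_le_C1: "g t \<le> C1 * \<bar>t\<bar>"
proof (cases "t > 0")
  case True
  have "t powr (-1) * g t \<le> C1" using g_powr_bound[OF True, of "-1"] by (simp add: C1_def)
  hence "g t / t \<le> C1" using True by (simp add: powr_minus divide_inverse mult.commute)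
  thus ?thesis using True by (simp add: divide_le_eq mult.commute)
next
  case False thus ?thesis using g_neg[of t] C_pos(2) by (simp add: mult_le_0_iff)
qed

lemma g_le_C3: "t > 0 \<Longrightarrow> g t \<le> C3 / t^3"
proof -
  assume t: "t > 0"
  have "t powr 3 * g t \<le> C3" using g_powr_bound[OF t, of 3] by (simp add: C3_def)
  hence "t^3 * g t \<le> C3" using t by (simp add: powr_realpow)
  thus ?thesis using t by (simp add: le_divide_eq mult.commute)
qed

lemma g_cont: "isCont g t"
proof -
  consider "t > 0" | "t < 0" | "t = 0" by linarith
  thus ?thesis
  proof cases
    case 1
    have "continuous_on {0<..} (\<lambda>t. (1 / (t * sig * sqrt (2 * pi))) * exp (- ((ln t - mu)^2) / (2 * sig^2)))"
      using sig_pos by (intro continuous_intros) auto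
    hence "continuous_on {0<..} g"
      by (rule continuous_on_eq) (auto simp: lognormal_density_def)
    thus ?thesis using 1 continuous_on_eq_continuous_at[OF open_greaterThan] by blast
  next
    case 2
    have "continuous_on {..<0} (\<lambda>t. 0::real)" by simp
    hence "continuous_on {..<0} g"
      by (rule continuous_on_eq) (auto simp: lognormal_density_def)
    thus ?thesis using 2 continuous_on_eq_continuous_at[OF open_lessThan] by blast
  next
    case 3
    have "((\<lambda>x. C1 * \<bar>x\<bar>) \<longlongrightarrow> C1 * \<bar>0\<bar>) (at 0)"
      by (intro tendsto_intros)
    hence l: "((\<lambda>x. C1 * \<bar>x\<bar>) \<longlongrightarrow> 0) (at 0)" by simp
    have "(g \<longlongrightarrow> 0) (at 0)"
      by (rule Lim_null_comparison[OF _ l]) (auto simp: g_nonneg g_le_C1)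
    thus ?thesis using 3 by (simp add: isCont_def g_neg)
  qed
qed

lemma g_cont_on: "continuous_on S g"
  by (simp add: continuous_at_imp_continuous_on g_cont)


lemma g_int: "g integrable_on {a..b}"
  by (rule integrable_continuous_interval[OF g_cont_on])

definition "G t = integral {0..t} g"

lemma G_nonneg: "0 \<le> G t"
  unfolding G_def by (rule hk_nonneg[OF g_int g_nonneg])

lemma G_split: "0 \<le> t \<Longrightarrow> t \<le> s \<Longrightarrow> G s = G t + integral {t..s} g"
  unfolding G_def using hk_combine[OF _ _ g_int, of 0 t s] by simp

lemma G_mono: "0 \<le> t \<Longrightarrow> t \<le> s \<Longrightarrow> G t \<le> G s"
  using G_split[of t s] hk_nonneg[OF g_int g_nonneg, of t s] by simp

abbreviation "phi \<equiv> normal_density mu sig"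

lemma phi_cont: "continuous_on S phi"
  unfolding normal_density_def using sig_pos by (intro continuous_intros) auto

lemma g_subst:
  assumes "0 < u" "u \<le> t"
  shows "integral {u..t} g = integral {ln u..ln t} phi"
proof -
  have "((\<lambda>x. (1/x) *\<^sub>R phi (ln x)) has_integral (integral {ln u..ln t} phi)) {u..t}"
  proof (rule has_integral_substitution[of u t ln "ln u" "ln t"])
    show "ln ` {u..t} \<subseteq> {ln u..ln t}" using assms by auto
    show "\<And>x. x \<in> {u..t} \<Longrightarrow> (ln has_real_derivative 1 / x) (at x within {u..t})"
      using assms by (auto intro!: derivative_eq_intros)
  qed (use assms phi_cont in auto)
  moreover have "(1/x) *\<^sub>R phi (ln x) = g x" if "x \<in> {u..t}" for x
  proof -
    have x: "x > 0" using that assms by auto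
    have "sqrt (2 * pi * sig\<^sup>2) = sig * sqrt (2 * pi)"
      using sig_pos by (simp add: real_sqrt_mult)
    thus ?thesis using x sig_pos by (simp add: normal_density_def lognormal_density_def)
  qed
  ultimately have "(g has_integral (integral {ln u..ln t} phi)) {u..t}"
    by (rule has_integral_eq[rotated])
  thus ?thesis by (rule integral_unique)
qed

lemma phi_has_int: "(phi has_integral 1) UNIV"
  using has_integral_integral_lborel[OF integrable_normal_density] sig_pos by simp

lemma phi_le1: "integral {a..b} phi \<le> 1"
proof -
  have "integral {a..b} phi \<le> integral UNIV phi"
    by (rule integral_subset_le) (use phi_has_int phi_cont integrable_continuous_interval in auto)
  thus ?thesis using phi_has_int integral_unique by metis
qed

lemma phi_tail: "e > 0 \<Longrightarrow> \<exists>B>0. \<forall>a b. a \<le> -B \<longrightarrow> B \<le> b \<longrightarrow> 1 - e < integral {a..b} phi"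
proof -
  assume e: "e > 0"
  from phi_has_int[unfolded has_integral_alt'[of phi 1 UNIV]] e
  obtain B where B: "B > 0" "\<And>a b. ball 0 B \<subseteq> cbox a b \<Longrightarrow> norm (integral (cbox a b) phi - 1) < e"
    by auto
  show ?thesis
  proof (intro exI[of _ B] conjI allI impI B)
    fix a b :: real assume ab: "a \<le> -B" "B \<le> b"
    have "ball 0 B \<subseteq> cbox a b" using ab by (auto simp: dist_real_def)
    from B(2)[OF this] show "1 - e < integral {a..b} phi" by auto
  qed
qed

lemma G_le1: "G t \<le> 1"
proof (cases "t > 0")
  case False
  hence "G t = 0" unfolding G_def by (cases "t = 0") auto
  thus ?thesis by simp
next
  case t: True
  show ?thesis
  proof (rule ccontr)
    assume "\<not> G t \<le> 1"
    hence Gt: "G t > 1" by simp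
    define u where "u = min (t/2) ((G t - 1)/(2*C0))"
    have u: "0 < u" "u \<le> t" "u \<le> (G t - 1)/(2*C0)" using t Gt C_pos unfolding u_def by auto
    have "integral {0..u} g \<le> integral {0..u} (\<lambda>_. C0)"
      by (rule integral_le) (use g_int g_le_C0 in auto)
    also have "\<dots> = C0 * u" using u by simp
    also have "\<dots> \<le> (G t - 1)/2" using u(3) C_pos by (simp add: field_simps)
    finally have 1: "integral {0..u} g \<le> (G t - 1)/2" .
    have "G t = G u + integral {u..t} g" using G_split[of u t] u by simp
    also have "integral {u..t} g \<le> 1" using g_subst[OF u(1,2)] phi_le1 by simp
    finally show False using 1 Gt unfolding G_def by simp
  qed
qed

lemma G_tail_lower: "e > 0 \<Longrightarrow> \<exists>T0>0. \<forall>T\<ge>T0. 1 - e < G T"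
proof -
  assume e: "e > 0"
  obtain B where B: "B > 0" "\<And>a b. a \<le> -B \<Longrightarrow> B \<le> b \<Longrightarrow> 1 - e < integral {a..b} phi"
    using phi_tail[OF e] by auto
  show ?thesis
  proof (intro exI[of _ "exp B"] conjI allI impI)
    fix T assume T: "exp B \<le> T"
    have u: "0 < exp (-B)" "exp (-B) \<le> T" using T B(1)
      by (auto intro: order_trans[of _ "exp B"])
    have lnT: "B \<le> ln T" using T by (metis exp_gt_zero exp_le_cancel_iff exp_ln order_less_le_trans)
    have "1 - e < integral {ln (exp (-B))..ln T} phi" using B(2)[OF _ lnT] by simp
    also have "\<dots> = integral {exp (-B)..T} g" using g_subst[OF u] by simp
    also have "\<dots> \<le> G T" using G_split[of "exp (-B)" T] u G_nonneg[of "exp (-B)"] by simp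
    finally show "1 - e < G T" .
  qed simp
qed

lemma g_int_pos: "0 \<le> t \<Longrightarrow> 0 < integral {t..t+1} g"
proof -
  assume t: "0 \<le> t"
  obtain x where x: "x \<in> {t+1/2..t+1}" "\<And>y. y \<in> {t+1/2..t+1} \<Longrightarrow> g x \<le> g y"
    using continuous_attains_inf[of "{t+1/2..t+1}" g] g_cont_on by fastforce
  have gx: "g x > 0" using x(1) t by (intro g_pos) auto
  have "0 < integral {t+1/2..t+1} (\<lambda>_. g x)" using gx by simp
  also have "\<dots> \<le> integral {t+1/2..t+1} g"
    by (rule integral_le) (use g_int x(2) in auto)
  also have "\<dots> \<le> integral {t..t+1} g"
    by (rule integral_subset_le) (use g_int g_nonneg in auto)
  finally show ?thesis .
qed

lemma G_lt1: "0 \<le> t \<Longrightarrow> G t < 1"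
  using G_split[of t "t+1"] g_int_pos[of t] G_le1[of "t+1"] by simp

lemma int_inv_cube:
  assumes "0 < t" "t \<le> T"
  shows "((\<lambda>u. C3/u^3) has_integral ((-C3/(2*T^2)) - (-C3/(2*t^2)))) {t..T}"
proof (rule fundamental_theorem_of_calculus)
  fix u assume u: "u \<in> {t..T}"
  hence u0: "u > 0" using assms by auto
  have "((\<lambda>u. -C3/(2*u^2)) has_real_derivative C3/u^3) (at u within {t..T})"
    using u0 by (auto intro!: derivative_eq_intros simp: field_simps power2_eq_square power3_eq_cube)
  thus "((\<lambda>u. -C3/(2*u^2)) has_vector_derivative C3/u^3) (at u within {t..T})"
    by (simp add: has_real_derivative_iff_has_vector_derivative)
qed (use assms in auto)

lemma G_tail: "0 < t \<Longrightarrow> 1 - G t \<le> C3/(2*t^2)"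
proof -
  assume t: "0 < t"
  show ?thesis
  proof (rule field_le_epsilon)
    fix e :: real assume e: "e > 0"
    obtain T0 where T0: "\<And>T. T \<ge> T0 \<Longrightarrow> 1 - e < G T" using G_tail_lower[OF e] by auto
    define T where "T = max t T0"
    have tT: "t \<le> T" "T0 \<le> T" unfolding T_def by auto
    have "integral {t..T} g \<le> integral {t..T} (\<lambda>u. C3/u^3)"
      by (rule integral_le) (use g_int int_inv_cube[OF t tT(1)] g_le_C3 t in auto)
    also have "\<dots> = C3/(2*t^2) - C3/(2*T^2)"
      using integral_unique[OF int_inv_cube[OF t tT(1)]] by simp
    also have "\<dots> \<le> C3/(2*t^2)" using C_pos by simp
    finally have "integral {t..T} g \<le> C3/(2*t^2)" .
    moreover have "G T = G t + integral {t..T} g" using G_split[of t T] t tT by simp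
    ultimately show "1 - G t \<le> C3/(2*t^2) + e" using T0[OF tT(2)] by simp
  qed
qed

definition "Kq = 4 + 2 * C3"

lemma G_bound: "0 \<le> t \<Longrightarrow> 1 - G t \<le> Kq/(1+t)^2"
proof -
  assume t: "0 \<le> t"
  have p: "(1+t)^2 > 0" using t by simp
  show ?thesis
  proof (cases "t \<le> 1")
    case True
    have "(1+t)^2 \<le> 2^2" using True t by (intro power_mono) auto
    hence "1 \<le> Kq/(1+t)^2" using p C_pos by (simp add: Kq_def field_simps)
    thus ?thesis using G_nonneg[of t] by simp
  next
    case False
    have "(1+t)^2 \<le> (2*t)^2" using False by (intro power_mono) auto
    hence "C3 * (1+t)^2 \<le> C3 * (4 * t^2)" using C_pos by (intro mult_left_mono) (auto simp: power_mult_distrib)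
    hence "C3/(2*t^2) \<le> 2 * C3/(1+t)^2" using p False by (simp add: field_simps)
    also have "\<dots> \<le> Kq/(1+t)^2" using p by (intro divide_right_mono) (auto simp: Kq_def)
    finally show ?thesis using G_tail[of t] False by simp
  qed
qed

end


lemmas hk_cong = Henstock_Kurzweil_Integration.integral_cong
lemmas hk_diff = Henstock_Kurzweil_Integration.integral_diff
lemmas hk_add = Henstock_Kurzweil_Integration.integral_add
lemmas hk_normbound = Henstock_Kurzweil_Integration.integral_norm_bound_integral

lemma at_Ici: "0 \<le> (x::real) \<Longrightarrow> x < T \<Longrightarrow> at x within {0..} = at x within {0..T}"
  by (rule at_within_nhd[where S="{..<T}"]) auto

lemma cont_Ici:
  fixes f :: "real \<Rightarrow> real"
  assumes "\<And>T. 0 \<le> T \<Longrightarrow> continuous_on {0..T} f"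
  shows "continuous_on {0..} f"
  unfolding continuous_on_eq_continuous_within
proof
  fix x :: real assume x: "x \<in> {0..}"
  have "continuous (at x within {0..x+1}) f"
    using assms[of "x+1"] x by (simp add: continuous_on_eq_continuous_within)
  thus "continuous (at x within {0..}) f" using at_Ici[of x "x+1"] x by simp
qed

lemma deriv_Ici:
  "0 \<le> x \<Longrightarrow> x < T \<Longrightarrow> (f has_real_derivative f') (at x within {0..T}) \<Longrightarrow>
   (f has_real_derivative f') (at x within {0..})"
  using at_Ici[of x T] by simp

lemma exp_int_le:
  fixes lam t :: real
  assumes "lam > 0" "0 \<le> t"
  shows "integral {0..t} (\<lambda>s. exp(lam* s)) \<le> exp(lam* t)/lam"
proof -
  have "((\<lambda>s. exp(lam* s)) has_integral (exp(lam* t)/lam - exp(lam*0)/lam)) {0..t}"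
  proof (rule fundamental_theorem_of_calculus[of 0 t "\<lambda>s. exp(lam * s)/lam"])
    fix x assume "x \<in> {0..t}"
    have "((\<lambda>s. exp(lam* s)/lam) has_real_derivative exp(lam* x)) (at x within {0..t})"
      using assms by (auto intro!: derivative_eq_intros)
    thus "((\<lambda>s. exp(lam* s)/lam) has_vector_derivative exp(lam* x)) (at x within {0..t})"
      by (simp add: has_real_derivative_iff_has_vector_derivative)
  qed (use assms in auto)
  hence "integral {0..t} (\<lambda>s. exp(lam* s)) = exp(lam* t)/lam - 1/lam" by (simp add: integral_unique)
  thus ?thesis using assms by simp
qed

lemma int_exp_bound:
  fixes f :: "real \<Rightarrow> real"
  assumes "lam > 0" "0 \<le> t" "f integrable_on {0..t}" "\<And>s. s \<in> {0..t} \<Longrightarrow> \<bar>f s\<bar> \<le> L * exp(lam* s)"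
  shows "\<bar>integral {0..t} f\<bar> \<le> L * exp(lam* t)/lam"
proof -
  have L: "L \<ge> 0" using assms(4)[of 0] assms(2) by simp
  have ei: "(\<lambda>s. exp(lam* s)) integrable_on {0..t}"
    by (intro integrable_continuous_interval continuous_intros)
  have ei2: "(\<lambda>s. L * exp(lam * s)) integrable_on {0..t}"
    by (intro integrable_continuous_interval continuous_intros)
  have "\<bar>integral {0..t} f\<bar> \<le> integral {0..t} (\<lambda>s. L * exp(lam* s))"
    using hk_normbound[OF assms(3) ei2] assms(4) by (simp only: real_norm_def)
  also have "\<dots> = L * integral {0..t} (\<lambda>s. exp(lam* s))" by simp
  also have "\<dots> \<le> L * (exp(lam* t)/lam)" using exp_int_le[OF assms(1,2)] L by (intro mult_left_mono) auto
  finally show ?thesis by simp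
qed

lemma exp_sol:
  fixes y F :: "real \<Rightarrow> real"
  assumes T: "0 \<le> T" and F: "continuous_on {0..T} F"
    and d: "\<And>t. t \<in> {0..T} \<Longrightarrow> (y has_real_derivative (-(k * F t * y t))) (at t within {0..T})"
  shows "y T = y 0 * exp(-(k * integral {0..T} F))"
proof -
  define h where "h t = y t * exp(k * integral {0..t} F)" for t
  have "(h has_real_derivative 0) (at t within {0..T})" if t: "t \<in> {0..T}" for t
  proof -
    have d1: "((\<lambda>t. integral {0..t} F) has_real_derivative F t) (at t within {0..T})"
      by (rule integral_has_real_derivative[OF F t])
    show ?thesis
      unfolding h_def by (auto intro!: derivative_eq_intros d1 d[OF t] simp: algebra_simps)
  qed
  then obtain c where c: "\<And>t. t \<in> {0..T} \<Longrightarrow> h t = c"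
    using has_field_derivative_zero_constant[of "{0..T}" h] by auto
  have "h T = h 0" using c T by simp
  hence "y T * exp(k * integral {0..T} F) = y 0" by (simp add: h_def)
  hence "y T = y 0 * exp(-(k * integral {0..T} F))"
    by (metis (no_types, opaque_lifting) exp_minus_inverse mult.assoc mult.commute mult_1)
  thus ?thesis .
qed



lemma alg_bound:
  fixes M x y A B P Q :: real
  assumes "\<bar>M - x\<bar> \<le> P" "\<bar>y - B\<bar> \<le> Q"
  shows "\<bar>(M - x) * (x - A) - (M - y) * (y - B)\<bar> \<le> P * (\<bar>x - y\<bar> + \<bar>A - B\<bar>) + Q * \<bar>x - y\<bar>"
proof -
  have e: "(M - x) * (x - A) - (M - y) * (y - B) = (M - x) * ((x - y) - (A - B)) + (y - x) * (y - B)"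
    by (simp add: algebra_simps)
  have 1: "\<bar>(M - x) * ((x - y) - (A - B))\<bar> \<le> P * (\<bar>x - y\<bar> + \<bar>A - B\<bar>)"
    unfolding abs_mult by (rule mult_mono) (use assms in auto)
  have 2: "\<bar>(y - x) * (y - B)\<bar> \<le> Q * \<bar>x - y\<bar>"
    unfolding abs_mult by (subst mult.commute, rule mult_mono) (use assms in auto)
  show ?thesis unfolding e using 1 2 abs_triangle_ineq[of "(M - x) * ((x - y) - (A - B))" "(y - x) * (y - B)"]
    by linarith
qed

context LN begin

lemma g_comp[continuous_intros]: "continuous_on S f \<Longrightarrow> continuous_on S (\<lambda>x. g (f x))"
  by (rule continuous_on_compose2[OF g_cont_on _ subset_UNIV])

lemma g_refl: "0 \<le> s \<Longrightarrow> integral {0..s} (\<lambda>r. g (s - r)) = G s"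
proof -
  assume s: "0 \<le> s"
  have "integral {0..s} (\<lambda>r. g (s - r)) = integral {- 0..- (-s)} (\<lambda>x. (\<lambda>y. g (s + y)) (- x))"
    by simp
  also have "\<dots> = integral {-s..0} (\<lambda>y. g (s + y))"
    using Henstock_Kurzweil_Integration.integral_reflect_real[of 0 "-s" "\<lambda>y. g (s + y)"] by simp
  also have "\<dots> = integral {-s..0} (g \<circ> (\<lambda>x. x + s))" by (simp add: o_def add.commute)
  also have "\<dots> = integral {-s + s..0 + s} g" by (rule integral_shift) (simp add: g_cont_on)
  finally show ?thesis by (simp add: G_def)
qed

lemma g_shift: "0 \<le> r \<Longrightarrow> r \<le> T \<Longrightarrow> integral {0..T} (\<lambda>s. g (s - r)) = G (T - r)"
proof -
  assume r: "0 \<le> r" "r \<le> T"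
  have "integral {0..T} (\<lambda>s. g (s - r)) = integral {0..T} (g \<circ> (\<lambda>x. x + (-r)))" by (simp add: o_def)
  also have "\<dots> = integral {0 + (-r)..T + (-r)} g" by (rule integral_shift) (simp add: g_cont_on)
  also have "\<dots> = integral {-r..0} g + integral {0..T-r} g"
    using hk_combine[of "-r" 0 "T-r" g] r g_int by simp
  also have "integral {-r..0} g = integral {-r..0} (\<lambda>_. 0)"
    by (rule hk_cong) (simp add: g_neg)
  finally show ?thesis by (simp add: G_def)
qed

lemma G_cont: "continuous_on {0..T} G"
  unfolding G_def by (rule indefinite_integral_continuous_1[OF g_int])

end

locale SI = LN +
  fixes M b I0 :: real
  assumes Mpos: "M > 0" and bpos: "b > 0" and I0pos: "0 < I0" and I0M: "I0 < M"
begin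

definition conv :: "(real \<Rightarrow> real) \<Rightarrow> real \<Rightarrow> real" where
  "conv h s = integral {0..s} (\<lambda>r. g (s - r) * h r)"
definition c :: "real \<Rightarrow> real" where "c x = max 0 (min M x)"
definition Fc where "Fc h s = c (h s) - conv (\<lambda>r. c (h r)) s"
definition Nf where "Nf h s = b * (M - c (h s)) * Fc h s"
definition Phi where "Phi h t = I0 + integral {0..t} (Nf h)"

lemma c_range: "0 \<le> c x" "c x \<le> M" using Mpos by (auto simp: c_def)
lemma c_lip: "\<bar>c x - c y\<bar> \<le> \<bar>x - y\<bar>" by (auto simp: c_def)
lemma c_mono: "x \<le> y \<Longrightarrow> c x \<le> c y" by (auto simp: c_def)
lemma c_id: "0 \<le> x \<Longrightarrow> x \<le> M \<Longrightarrow> c x = x" by (auto simp: c_def)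
lemma c_cont[continuous_intros]: "continuous_on S f \<Longrightarrow> continuous_on S (\<lambda>x. c (f x))"
  unfolding c_def by (intro continuous_intros)

lemma conv_int: "continuous_on {0..T} h \<Longrightarrow> (\<lambda>r. g (s - r) * h r) integrable_on {0..T}"
  by (intro integrable_continuous_interval continuous_intros)

lemma conv_eq:
  assumes h: "continuous_on {0..T} h" and s: "0 \<le> s" "s \<le> T"
  shows "conv h s = integral {0..T} (\<lambda>r. g (s - r) * h r)"
proof -
  have "integral {0..T} (\<lambda>r. g (s - r) * h r) = conv h s + integral {s..T} (\<lambda>r. g (s - r) * h r)"
    unfolding conv_def using hk_combine[OF s conv_int[OF h]] by simp
  also have "integral {s..T} (\<lambda>r. g (s - r) * h r) = integral {s..T} (\<lambda>r. 0)"
    by (rule hk_cong) (simp add: g_neg)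
  finally show ?thesis by simp
qed

lemma conv_cont:
  assumes h: "continuous_on {0..T} h"
  shows "continuous_on {0..T} (conv h)"
proof -
  have "continuous_on ({0..T} \<times> cbox 0 T) (\<lambda>p. g (fst p - snd p) * h (snd p))"
    by (intro continuous_intros continuous_on_compose2[OF h]) auto
  hence "continuous_on {0..T} (\<lambda>s. integral (cbox 0 T) (\<lambda>r. g (s - r) * h r))"
    by (intro integral_continuous_on_param) (simp add: case_prod_beta)
  thus ?thesis
    by (rule continuous_on_eq) (use conv_eq[OF h] in auto)
qed

lemma conv_cont_Ici: "continuous_on {0..} h \<Longrightarrow> continuous_on {0..} (conv h)"
  by (rule cont_Ici, rule conv_cont, erule continuous_on_subset) auto

lemma conv_bounds:
  assumes h: "continuous_on {0..s} h" and s: "0 \<le> s" and hb: "\<And>r. r \<in> {0..s} \<Longrightarrow> 0 \<le> h r \<and> h r \<le> H"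
  shows "0 \<le> conv h s" "conv h s \<le> H * G s"
proof -
  show "0 \<le> conv h s" unfolding conv_def
    by (rule hk_nonneg[OF conv_int[OF h]]) (use hb g_nonneg in auto)
  have "conv h s \<le> integral {0..s} (\<lambda>r. H * g (s - r))" unfolding conv_def
  proof (rule integral_le[OF conv_int[OF h]])
    show "(\<lambda>r. H * g (s - r)) integrable_on {0..s}"
      by (intro integrable_continuous_interval continuous_intros)
    fix r assume "r \<in> {0..s}"
    thus "g (s - r) * h r \<le> H * g (s - r)"
      using hb[of r] g_nonneg[of "s - r"] by (simp add: mult.commute mult_right_mono)
  qed
  also have "\<dots> = H * G s" using g_refl[OF s] by simp
  finally show "conv h s \<le> H * G s" .
qed

lemma conv_diff:
  assumes v: "continuous_on {0..s} v" and w: "continuous_on {0..s} w" and s: "0 \<le> s" and lam: "lam > 0"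
    and d: "\<And>r. r \<in> {0..s} \<Longrightarrow> \<bar>v r - w r\<bar> \<le> D * exp (lam * r)"
  shows "\<bar>conv v s - conv w s\<bar> \<le> C0 * D * exp (lam * s) / lam"
proof -
  have "conv v s - conv w s = integral {0..s} (\<lambda>r. g (s - r) * v r - g (s - r) * w r)"
    unfolding conv_def by (rule hk_diff[symmetric, OF conv_int[OF v] conv_int[OF w]])
  also have "\<dots> = integral {0..s} (\<lambda>r. g (s - r) * (v r - w r))" by (simp add: algebra_simps)
  finally have e: "conv v s - conv w s = \<dots>" .
  have "\<bar>integral {0..s} (\<lambda>r. g (s - r) * (v r - w r))\<bar> \<le> (C0 * D) * exp (lam * s) / lam"
  proof (rule int_exp_bound[OF lam s])
    show "(\<lambda>r. g (s - r) * (v r - w r)) integrable_on {0..s}"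
      by (intro integrable_continuous_interval continuous_intros v w)
    fix r assume r: "r \<in> {0..s}"
    have "\<bar>g (s - r) * (v r - w r)\<bar> = g (s - r) * \<bar>v r - w r\<bar>" by (simp add: abs_mult g_nonneg)
    also have "\<dots> \<le> C0 * (D * exp (lam * r))"
      by (rule mult_mono) (use d[OF r] g_le_C0 C_pos in auto)
    finally show "\<bar>g (s - r) * (v r - w r)\<bar> \<le> C0 * D * exp (lam * r)" by simp
  qed
  thus ?thesis using e by simp
qed

end


context SI begin

lemma Fc_cont: "continuous_on {0..} v \<Longrightarrow> continuous_on {0..} (Fc v)"
proof -
  assume v: "continuous_on {0..} v"
  have e: "Fc v = (\<lambda>s. c (v s) - conv (\<lambda>r. c (v r)) s)" by (simp add: Fc_def fun_eq_iff)
  show ?thesis unfolding e by (intro continuous_intros conv_cont_Ici c_cont v)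
qed

lemma Nf_cont: "continuous_on {0..} v \<Longrightarrow> continuous_on {0..} (Nf v)"
proof -
  assume v: "continuous_on {0..} v"
  have e: "Nf v = (\<lambda>s. b * (M - c (v s)) * Fc v s)" by (simp add: Nf_def fun_eq_iff)
  show ?thesis unfolding e by (intro continuous_intros Fc_cont c_cont v)
qed

lemma conv_c_bounds:
  assumes v: "continuous_on {0..} v" and s: "0 \<le> s"
  shows "0 \<le> conv (\<lambda>r. c (v r)) s" "conv (\<lambda>r. c (v r)) s \<le> M"
proof -
  have cv: "continuous_on {0..s} (\<lambda>r. c (v r))"
    by (intro c_cont continuous_on_subset[OF v]) auto
  show "0 \<le> conv (\<lambda>r. c (v r)) s" using conv_bounds(1)[OF cv s, of M] c_range by auto
  have "conv (\<lambda>r. c (v r)) s \<le> M * G s" using conv_bounds(2)[OF cv s, of M] c_range by auto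
  also have "\<dots> \<le> M * 1" using G_le1 Mpos by (intro mult_left_mono) auto
  finally show "conv (\<lambda>r. c (v r)) s \<le> M" by simp
qed

lemma Nf_bound:
  assumes v: "continuous_on {0..} v" and s: "0 \<le> s"
  shows "\<bar>Nf v s\<bar> \<le> b * M * M"
proof -
  have 1: "\<bar>M - c (v s)\<bar> \<le> M" using c_range[of "v s"] by auto
  have 2: "\<bar>Fc v s\<bar> \<le> M" unfolding Fc_def using c_range[of "v s"] conv_c_bounds[OF v s] by auto
  have "\<bar>Nf v s\<bar> = b * (\<bar>M - c (v s)\<bar> * \<bar>Fc v s\<bar>)" unfolding Nf_def using bpos by (simp add: abs_mult)
  also have "\<dots> \<le> b * (M * M)" using 1 2 bpos by (intro mult_left_mono mult_mono) auto
  finally show ?thesis by simp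
qed

lemma Nf_lip:
  assumes v: "continuous_on {0..} v" and w: "continuous_on {0..} w" and s: "0 \<le> s" and lam: "lam > 0"
    and d: "\<And>r. r \<in> {0..s} \<Longrightarrow> \<bar>v r - w r\<bar> \<le> D * exp (lam * r)"
  shows "\<bar>Nf v s - Nf w s\<bar> \<le> b * M * (2 + C0 / lam) * D * exp (lam * s)"
proof -
  define x where "x = c (v s)"
  define y where "y = c (w s)"
  define A where "A = conv (\<lambda>r. c (v r)) s"
  define B where "B = conv (\<lambda>r. c (w r)) s"
  have xy: "\<bar>x - y\<bar> \<le> D * exp (lam * s)" unfolding x_def y_def
    using c_lip[of "v s" "w s"] d[of s] s by simp
  have AB: "\<bar>A - B\<bar> \<le> C0 * D * exp (lam * s) / lam" unfolding A_def B_def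
  proof (rule conv_diff[OF _ _ s lam])
    show "continuous_on {0..s} (\<lambda>r. c (v r))" "continuous_on {0..s} (\<lambda>r. c (w r))"
      by (intro c_cont continuous_on_subset[OF v] continuous_on_subset[OF w]; auto)+
    show "\<bar>c (v r) - c (w r)\<bar> \<le> D * exp (lam * r)" if "r \<in> {0..s}" for r
      using c_lip[of "v r" "w r"] d[OF that] by simp
  qed
  have "Nf v s - Nf w s = b * ((M - x) * (x - A) - (M - y) * (y - B))"
    unfolding Nf_def Fc_def x_def y_def A_def B_def by (simp add: algebra_simps)
  hence "\<bar>Nf v s - Nf w s\<bar> = b * \<bar>(M - x) * (x - A) - (M - y) * (y - B)\<bar>"
    using bpos by (simp add: abs_mult)
  also have "\<dots> \<le> b * (M * (\<bar>x - y\<bar> + \<bar>A - B\<bar>) + M * \<bar>x - y\<bar>)"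
  proof -
    have "\<bar>M - x\<bar> \<le> M" using c_range[of "v s"] unfolding x_def by simp
    moreover have "\<bar>y - B\<bar> \<le> M" using c_range[of "w s"] conv_c_bounds[OF w s] unfolding y_def B_def by simp
    ultimately have "\<bar>(M - x) * (x - A) - (M - y) * (y - B)\<bar> \<le> M * (\<bar>x - y\<bar> + \<bar>A - B\<bar>) + M * \<bar>x - y\<bar>"
      by (rule alg_bound)
    thus ?thesis using bpos by (simp add: mult_left_mono)
  qed
  also have "\<dots> \<le> b * (M * (D * exp (lam * s) + C0 * D * exp (lam * s) / lam) + M * (D * exp (lam * s)))"
  proof -
    have "M * (\<bar>x - y\<bar> + \<bar>A - B\<bar>) \<le> M * (D * exp (lam * s) + C0 * D * exp (lam * s) / lam)"
      using xy AB Mpos by (intro mult_left_mono add_mono) auto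
    moreover have "M * \<bar>x - y\<bar> \<le> M * (D * exp (lam * s))" using xy Mpos by (intro mult_left_mono) auto
    ultimately show ?thesis using bpos by (intro mult_left_mono) auto
  qed
  also have "\<dots> = b * M * (2 + C0 / lam) * D * exp (lam * s)"
    using lam by (simp add: field_simps)
  finally show ?thesis .
qed

lemma Nf_int: "0 \<le> a \<Longrightarrow> continuous_on {0..} v \<Longrightarrow> Nf v integrable_on {a..T}"
  by (rule integrable_continuous_interval, rule continuous_on_subset[OF Nf_cont]) auto

lemma Phi_cont: "continuous_on {0..} v \<Longrightarrow> continuous_on {0..} (Phi v)"
proof -
  assume v: "continuous_on {0..} v"
  have e: "Phi v = (\<lambda>t. I0 + integral {0..t} (Nf v))" by (simp add: Phi_def fun_eq_iff)
  have "continuous_on {0..} (\<lambda>t. integral {0..t} (Nf v))"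
    by (rule cont_Ici, rule indefinite_integral_continuous_1, rule Nf_int[OF _ v]) simp
  thus ?thesis unfolding e by (intro continuous_intros)
qed

lemma Phi_lip:
  assumes v: "continuous_on {0..} v" and w: "continuous_on {0..} w" and t: "0 \<le> t" and lam: "lam > 0"
    and d: "\<And>r. r \<in> {0..t} \<Longrightarrow> \<bar>v r - w r\<bar> \<le> D * exp (lam * r)"
  shows "\<bar>Phi v t - Phi w t\<bar> \<le> b * M * (2 + C0 / lam) * D * exp (lam * t) / lam"
proof -
  have "Phi v t - Phi w t = integral {0..t} (\<lambda>s. Nf v s - Nf w s)"
    unfolding Phi_def using hk_diff[OF Nf_int[OF _ v] Nf_int[OF _ w]] by simp
  also have "\<bar>\<dots>\<bar> \<le> (b * M * (2 + C0 / lam) * D) * exp (lam * t) / lam"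
  proof (rule int_exp_bound[OF lam t])
    show "(\<lambda>s. Nf v s - Nf w s) integrable_on {0..t}"
      by (intro integrable_diff Nf_int v w) auto
    fix s assume "s \<in> {0..t}"
    thus "\<bar>Nf v s - Nf w s\<bar> \<le> b * M * (2 + C0 / lam) * D * exp (lam * s)"
      using Nf_lip[OF v w _ lam, of s D] d by auto
  qed
  finally show ?thesis .
qed

lemma Phi_bound:
  assumes v: "continuous_on {0..} v" and t: "0 \<le> t"
  shows "\<bar>Phi v t\<bar> \<le> I0 + b * M * M * t"
proof -
  have "norm (integral {0..t} (Nf v)) \<le> integral {0..t} (\<lambda>_. b * M * M)"
    by (rule hk_normbound[OF Nf_int[OF _ v] integrable_const_ivl]) (use Nf_bound[OF v] in auto)
  also have "\<dots> = b * M * M * t" using t by simp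
  finally have "\<bar>integral {0..t} (Nf v)\<bar> \<le> b * M * M * t" by simp
  thus ?thesis unfolding Phi_def using I0pos by simp
qed

lemma Phi_deriv:
  assumes v: "continuous_on {0..} v" and t: "0 \<le> t"
  shows "(Phi v has_real_derivative Nf v t) (at t within {0..})"
proof -
  have "((\<lambda>x. integral {0..x} (Nf v)) has_real_derivative Nf v t) (at t within {0..t+1})"
    by (rule integral_has_real_derivative) (use t in \<open>auto intro: continuous_on_subset[OF Nf_cont[OF v]]\<close>)
  hence "(Phi v has_real_derivative Nf v t) (at t within {0..t+1})"
    unfolding Phi_def by (auto intro!: derivative_eq_intros)
  thus ?thesis by (rule deriv_Ici[OF t, rotated]) simp
qed

end


context SI begin

definition lam where "lam = max 1 (2 * b * M * (2 + C0))"

lemma lam_pos: "lam > 0" "lam \<ge> 1" unfolding lam_def by auto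

lemma Lc_half: "b * M * (2 + C0 / lam) / lam \<le> 1/2"
proof -
  have "C0 / lam \<le> C0" using lam_pos C_pos by (simp add: divide_le_eq)
  hence "b * M * (2 + C0 / lam) \<le> b * M * (2 + C0)" using bpos Mpos by (intro mult_left_mono) auto
  also have "\<dots> \<le> lam / 2" unfolding lam_def by auto
  finally show ?thesis using lam_pos by (simp add: divide_le_eq)
qed

definition V :: "(real \<Rightarrow>\<^sub>C real) \<Rightarrow> real \<Rightarrow> real" where
  "V u t = exp (lam * t) * apply_bcontfun u t"

definition PsiF :: "(real \<Rightarrow>\<^sub>C real) \<Rightarrow> real \<Rightarrow> real" where
  "PsiF u t = exp (- lam * max t 0) * Phi (V u) (max t 0)"

lemma V_cont: "continuous_on S (V u)"
proof -
  have e: "V u = (\<lambda>t. exp (lam * t) * apply_bcontfun u t)" by (simp add: V_def fun_eq_iff)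
  show ?thesis unfolding e by (intro continuous_intros continuous_on_apply_bcontfun)
qed

lemma PsiF_bcont: "PsiF u \<in> bcontfun"
proof (rule bcontfun_normI)
  have e: "PsiF u = (\<lambda>t. exp (- lam * max t 0) * Phi (V u) (max t 0))" by (simp add: PsiF_def fun_eq_iff)
  have "continuous_on UNIV (\<lambda>t. Phi (V u) (max t 0))"
    by (rule continuous_on_compose2[OF Phi_cont[OF V_cont]]) (auto intro!: continuous_intros)
  thus "continuous_on UNIV (PsiF u)" unfolding e by (intro continuous_intros)
  fix t :: real
  define t' where "t' = max t 0"
  have t': "0 \<le> t'" unfolding t'_def by simp
  have ex: "lam * t' * exp (- lam * t') \<le> 1"
  proof -
    have "lam * t' \<le> exp (lam * t')" using exp_ge_add_one_self[of "lam * t'"] by linarith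
    thus ?thesis by (simp add: exp_minus field_simps)
  qed
  have "norm (PsiF u t) = exp (- lam * t') * \<bar>Phi (V u) t'\<bar>" by (simp add: PsiF_def t'_def abs_mult)
  also have "\<dots> \<le> exp (- lam * t') * (I0 + b * M * M * t')"
    by (rule mult_left_mono[OF Phi_bound[OF V_cont t']]) simp
  also have "\<dots> = exp (- lam * t') * I0 + (b * M * M / lam) * (lam * t' * exp (- lam * t'))"
    using lam_pos by (simp add: field_simps)
  also have "\<dots> \<le> 1 * I0 + (b * M * M / lam) * 1"
    using I0pos bpos Mpos lam_pos t' ex by (intro add_mono mult_mono) auto
  finally show "norm (PsiF u t) \<le> I0 + b * M * M / lam" by simp
qed

definition Psi where "Psi u = Bcontfun (PsiF u)"

lemma Psi_apply: "apply_bcontfun (Psi u) t = PsiF u t"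
  unfolding Psi_def using PsiF_bcont by (simp add: Bcontfun_inverse)

lemma Psi_contr: "dist (Psi u) (Psi w) \<le> 1/2 * dist u w"
proof (rule dist_bound)
  fix t :: real
  define t' where "t' = max t 0"
  have t': "0 \<le> t'" unfolding t'_def by simp
  define D where "D = dist u w"
  have d: "\<bar>V u r - V w r\<bar> \<le> D * exp (lam * r)" for r
  proof -
    have "V u r - V w r = exp (lam * r) * (apply_bcontfun u r - apply_bcontfun w r)"
      by (simp add: V_def algebra_simps)
    hence "\<bar>V u r - V w r\<bar> = exp (lam * r) * \<bar>apply_bcontfun u r - apply_bcontfun w r\<bar>"
      by (simp add: abs_mult)
    also have "\<dots> \<le> exp (lam * r) * D"
      using dist_bounded[of u r w] unfolding D_def dist_real_def by (intro mult_left_mono) auto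
    finally show ?thesis by (simp add: mult.commute)
  qed
  have "\<bar>Phi (V u) t' - Phi (V w) t'\<bar> \<le> b * M * (2 + C0 / lam) * D * exp (lam * t') / lam"
    by (rule Phi_lip[OF V_cont V_cont t' lam_pos(1)]) (use d in auto)
  also have "\<dots> = (b * M * (2 + C0 / lam) / lam) * (D * exp (lam * t'))" by simp
  also have "\<dots> \<le> 1/2 * (D * exp (lam * t'))"
    using Lc_half by (intro mult_right_mono) (auto simp: D_def)
  finally have 1: "\<bar>Phi (V u) t' - Phi (V w) t'\<bar> \<le> 1/2 * (D * exp (lam * t'))" .
  have "dist (apply_bcontfun (Psi u) t) (apply_bcontfun (Psi w) t) = exp (- lam * t') * \<bar>Phi (V u) t' - Phi (V w) t'\<bar>"
    by (simp add: Psi_apply PsiF_def dist_real_def t'_def abs_mult flip: right_diff_distrib)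
  also have "\<dots> \<le> exp (- lam * t') * (1/2 * (D * exp (lam * t')))"
    by (rule mult_left_mono[OF 1]) simp
  also have "\<dots> = 1/2 * D" by (simp add: exp_minus field_simps)
  finally show "dist (apply_bcontfun (Psi u) t) (apply_bcontfun (Psi w) t) \<le> 1/2 * dist u w"
    by (simp add: D_def)
qed

lemma Psi_fix_ex: "\<exists>u. Psi u = u"
  using banach_fix_type[of "1/2" Psi] Psi_contr by auto

definition u0 where "u0 = (SOME u. Psi u = u)"
definition Is where "Is = V u0"

lemma u0_fix: "Psi u0 = u0"
  unfolding u0_def using someI_ex[OF Psi_fix_ex] .

lemma Is_cont: "continuous_on S Is"
  unfolding Is_def by (rule V_cont)

lemma Is_fix: "0 \<le> t \<Longrightarrow> Is t = Phi Is t"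
proof -
  assume t: "0 \<le> t"
  have "apply_bcontfun u0 t = PsiF u0 t" using Psi_apply[of u0 t] u0_fix by simp
  hence "Is t = exp (lam * t) * (exp (- lam * t) * Phi Is t)"
    unfolding Is_def V_def PsiF_def using t by simp
  also have "\<dots> = Phi Is t" by (simp add: exp_minus field_simps)
  finally show ?thesis .
qed

lemma Is_0: "Is 0 = I0"
  using Is_fix[of 0] by (simp add: Phi_def)

lemma Is_deriv: "0 \<le> t \<Longrightarrow> (Is has_real_derivative Nf Is t) (at t within {0..})"
  by (rule has_field_derivative_transform_within[OF Phi_deriv[OF Is_cont] zero_less_one])
     (auto simp: Is_fix)

lemma Is_diff: "0 \<le> s \<Longrightarrow> s \<le> t \<Longrightarrow> Is t - Is s = integral {s..t} (Nf Is)"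
  using Is_fix[of s] Is_fix[of t] hk_combine[of 0 s t "Nf Is"] Nf_int[OF _ Is_cont, of 0 t]
  by (simp add: Phi_def)

end


lemma first_hit:
  fixes f :: "real \<Rightarrow> real"
  assumes f: "continuous_on {0..} f" and ex: "\<exists>t\<ge>0. f t \<le> 0"
  shows "\<exists>t1\<ge>0. f t1 \<le> 0 \<and> (\<forall>s. 0 \<le> s \<and> s < t1 \<longrightarrow> f s > 0)"
proof -
  define Z where "Z = {0..} \<inter> f -` {..0}"
  have cl: "closed Z" unfolding Z_def by (rule continuous_closed_preimage[OF f]) auto
  have ne: "Z \<noteq> {}" using ex unfolding Z_def by auto
  have bb: "bdd_below Z" unfolding Z_def by (rule bdd_belowI[of _ 0]) auto
  have inZ: "Inf Z \<in> Z" by (rule closed_contains_Inf[OF ne bb cl])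
  show ?thesis
  proof (intro exI[of _ "Inf Z"] conjI allI impI)
    show "0 \<le> Inf Z" "f (Inf Z) \<le> 0" using inZ unfolding Z_def by auto
    fix s assume s: "0 \<le> s \<and> s < Inf Z"
    show "f s > 0"
    proof (rule ccontr)
      assume "\<not> f s > 0"
      hence "s \<in> Z" using s unfolding Z_def by auto
      hence "Inf Z \<le> s" by (rule cInf_lower[OF _ bb])
      thus False using s by simp
    qed
  qed
qed

lemma ge_closure:
  fixes f :: "real \<Rightarrow> real"
  assumes "continuous_on {0..t1} f" "0 < t1" "\<And>s. 0 \<le> s \<Longrightarrow> s < t1 \<Longrightarrow> a \<le> f s"
  shows "a \<le> f t1"
  using continuous_ge_on_closure[of "{0..<t1}" f t1 a] assms by auto

context SI begin

lemma conv_0: "conv h 0 = 0" by (simp add: conv_def)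

lemma Fc_pos: "0 \<le> t \<Longrightarrow> Fc Is t > 0"
proof (rule ccontr)
  assume t: "0 \<le> t" "\<not> Fc Is t > 0"
  obtain t1 where t1: "t1 \<ge> 0" "Fc Is t1 \<le> 0" "\<And>s. 0 \<le> s \<Longrightarrow> s < t1 \<Longrightarrow> Fc Is s > 0"
    using first_hit[OF Fc_cont[OF Is_cont]] t by force
  have F0: "Fc Is 0 = I0" by (simp add: Fc_def conv_0 Is_0 c_id I0pos less_imp_le I0M)
  have t1pos: "t1 > 0" using t1 F0 I0pos by (cases "t1 = 0") auto
  have Nnn: "0 \<le> Nf Is r" if "0 \<le> r" "r < t1" for r
    using t1(3)[OF that] c_range[of "Is r"] bpos unfolding Nf_def by simp
  have Nnn': "0 \<le> Nf Is r" if "r \<in> {0..t1}" for r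
  proof (cases "r < t1")
    case True thus ?thesis using Nnn that by auto
  next
    case False
    hence "r = t1" using that by auto
    thus ?thesis using ge_closure[OF continuous_on_subset[OF Nf_cont[OF Is_cont]] t1pos, of 0] Nnn by auto
  qed
  have mono: "Is r \<le> Is t1" if "r \<in> {0..t1}" for r
  proof -
    have "0 \<le> integral {r..t1} (Nf Is)"
      by (rule hk_nonneg[OF Nf_int[OF _ Is_cont]]) (use that Nnn' in auto)
    thus ?thesis using Is_diff[of r t1] that by simp
  qed
  have cge: "I0 \<le> c (Is t1)"
    using c_mono[OF mono[of 0]] t1 Is_0 c_id[of I0] I0pos I0M by simp
  have "conv (\<lambda>r. c (Is r)) t1 \<le> c (Is t1) * G t1"
    by (rule conv_bounds(2)[OF _ t1(1)]) (use mono c_mono c_range in \<open>auto intro!: continuous_intros Is_cont\<close>)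
  hence "Fc Is t1 \<ge> c (Is t1) * (1 - G t1)" unfolding Fc_def by (simp add: algebra_simps)
  moreover have "c (Is t1) * (1 - G t1) > 0" using cge I0pos G_lt1[OF t1(1)] by simp
  ultimately show False using t1(2) by simp
qed

lemma Nf_nonneg: "0 \<le> t \<Longrightarrow> 0 \<le> Nf Is t"
  using Fc_pos[of t] c_range[of "Is t"] bpos unfolding Nf_def by simp

lemma Is_mono: "0 \<le> s \<Longrightarrow> s \<le> t \<Longrightarrow> Is s \<le> Is t"
  using Is_diff[of s t] hk_nonneg[OF Nf_int[OF _ Is_cont], of s t] Nf_nonneg by simp

lemma Is_ge: "0 \<le> t \<Longrightarrow> I0 \<le> Is t"
  using Is_mono[of 0 t] Is_0 by simp

lemma Is_ltM: "0 \<le> t \<Longrightarrow> Is t < M"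
proof (rule ccontr)
  assume t: "0 \<le> t" "\<not> Is t < M"
  have fc: "continuous_on {0..} (\<lambda>t. M - Is t)" by (intro continuous_intros Is_cont)
  obtain t1 where t1: "t1 \<ge> 0" "M - Is t1 \<le> 0" "\<And>s. 0 \<le> s \<Longrightarrow> s < t1 \<Longrightarrow> M - Is s > 0"
    using first_hit[OF fc] t by force
  have t1pos: "t1 > 0" using t1 Is_0 I0M by (cases "t1 = 0") auto
  have le: "Is r \<le> M" if "r \<in> {0..t1}" for r
  proof (cases "r < t1")
    case True thus ?thesis using t1(3)[of r] that by auto
  next
    case False
    hence "r = t1" using that by auto
    moreover have "0 \<le> M - Is t1"
      using ge_closure[OF continuous_on_subset[OF fc] t1pos, of 0] t1(3) by (auto simp: less_imp_le)
    ultimately show ?thesis by simp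
  qed
  have cid: "c (Is r) = Is r" if "r \<in> {0..t1}" for r
    using le[OF that] Is_ge[of r] I0pos that by (intro c_id) auto
  have "M - Is t1 = (M - Is 0) * exp (- (b * integral {0..t1} (Fc Is)))"
  proof (rule exp_sol[OF t1(1)])
    show "continuous_on {0..t1} (Fc Is)" by (rule continuous_on_subset[OF Fc_cont[OF Is_cont]]) auto
    fix r assume r: "r \<in> {0..t1}"
    have "(Is has_real_derivative Nf Is r) (at r within {0..t1})"
      by (rule DERIV_subset[OF Is_deriv]) (use r in auto)
    hence "((\<lambda>t. M - Is t) has_real_derivative - Nf Is r) (at r within {0..t1})"
      by (auto intro!: derivative_eq_intros)
    moreover have "- Nf Is r = - (b * Fc Is r * (M - Is r))" unfolding Nf_def using cid[OF r] by simp
    ultimately show "((\<lambda>t. M - Is t) has_real_derivative - (b * Fc Is r * (M - Is r))) (at r within {0..t1})"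
      by simp
  qed
  also have "\<dots> > 0" using Is_0 I0M by simp
  finally show False using t1(2) by simp
qed

lemma Is_pos: "0 \<le> t \<Longrightarrow> 0 < Is t" using Is_ge I0pos by force

lemma c_Is: "0 \<le> t \<Longrightarrow> c (Is t) = Is t"
  using Is_pos Is_ltM by (intro c_id) (auto simp: less_imp_le)

lemma conv_c_Is: "0 \<le> s \<Longrightarrow> conv (\<lambda>r. c (Is r)) s = conv Is s"
  unfolding conv_def by (rule hk_cong) (simp add: c_Is)

lemma Fc_force: "0 \<le> s \<Longrightarrow> Fc Is s = force g Is s"
  unfolding Fc_def force_def using c_Is conv_c_Is by (simp add: conv_def)

lemma Nf_Is: "0 \<le> s \<Longrightarrow> Nf Is s = b * (M - Is s) * force g Is s"
  unfolding Nf_def using c_Is Fc_force by simp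

end


context SI begin

definition N0 where "N0 h s = b * (M - h s) * (h s - conv h s)"

lemma conv_abs:
  assumes h: "continuous_on {0..s} h" and s: "0 \<le> s" and hb: "\<And>r. r \<in> {0..s} \<Longrightarrow> \<bar>h r\<bar> \<le> H"
  shows "\<bar>conv h s\<bar> \<le> H"
proof -
  have H: "0 \<le> H" using hb[of 0] s by force
  have "norm (conv h s) \<le> integral {0..s} (\<lambda>r. H * g (s - r))" unfolding conv_def
  proof (rule hk_normbound[OF conv_int[OF h]])
    show "(\<lambda>r. H * g (s - r)) integrable_on {0..s}"
      by (intro integrable_continuous_interval continuous_intros)
    fix r assume "r \<in> {0..s}"
    thus "norm (g (s - r) * h r) \<le> H * g (s - r)"
      using hb[of r] g_nonneg[of "s - r"] by (simp add: abs_mult mult.commute[of H] mult_left_mono)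
  qed
  also have "\<dots> = H * G s" using g_refl[OF s] by simp
  also have "\<dots> \<le> H * 1" using G_le1 H by (intro mult_left_mono) auto
  finally show ?thesis by simp
qed

lemma N0_cont: "continuous_on {0..T} h \<Longrightarrow> continuous_on {0..T} (N0 h)"
proof -
  assume h: "continuous_on {0..T} h"
  have e: "N0 h = (\<lambda>s. b * (M - h s) * (h s - conv h s))" by (simp add: N0_def fun_eq_iff)
  show ?thesis unfolding e by (intro continuous_intros conv_cont h)
qed

lemma uniq_I:
  assumes T: "0 \<le> T" and v: "continuous_on {0..T} v" and w: "continuous_on {0..T} w"
    and fv: "\<And>t. t \<in> {0..T} \<Longrightarrow> v t = I0 + integral {0..t} (N0 v)"
    and fw: "\<And>t. t \<in> {0..T} \<Longrightarrow> w t = I0 + integral {0..t} (N0 w)"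
  shows "\<And>t. t \<in> {0..T} \<Longrightarrow> v t = w t"
proof -
  obtain K1 where K1: "\<And>t. t \<in> {0..T} \<Longrightarrow> \<bar>v t\<bar> \<le> K1"
    using compact_imp_bounded[OF compact_continuous_image[OF v compact_Icc]]
    unfolding bounded_iff by (auto simp del: atLeastAtMost_iff; blast)
  obtain K2 where K2: "\<And>t. t \<in> {0..T} \<Longrightarrow> \<bar>w t\<bar> \<le> K2"
    using compact_imp_bounded[OF compact_continuous_image[OF w compact_Icc]]
    unfolding bounded_iff by (auto simp del: atLeastAtMost_iff; blast)
  define K where "K = max M (max K1 K2)"
  have K: "M \<le> K" "0 < K" using Mpos unfolding K_def by auto
  have vK: "\<bar>v t\<bar> \<le> K" and wK: "\<bar>w t\<bar> \<le> K" if "t \<in> {0..T}" for t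
    using K1[OF that] K2[OF that] unfolding K_def by auto
  define lm where "lm = max 1 (4 * b * K * (2 + C0))"
  have lm: "lm > 0" "lm \<ge> 1" unfolding lm_def by auto
  have half: "2 * b * K * (2 + C0 / lm) / lm \<le> 1/2"
  proof -
    have "C0 / lm \<le> C0" using lm C_pos by (simp add: divide_le_eq)
    hence "2 * b * K * (2 + C0 / lm) \<le> 2 * b * K * (2 + C0)" using bpos K by (intro mult_left_mono) auto
    also have "\<dots> \<le> lm / 2" unfolding lm_def by auto
    finally show ?thesis using lm by (simp add: divide_le_eq)
  qed
  define e where "e t = exp (- lm * t) * \<bar>v t - w t\<bar>" for t
  have ec: "continuous_on {0..T} e" unfolding e_def by (intro continuous_intros v w)
  obtain ts where ts: "ts \<in> {0..T}" "\<And>t. t \<in> {0..T} \<Longrightarrow> e t \<le> e ts"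
    using continuous_attains_sup[OF compact_Icc _ ec] T by auto
  define D where "D = e ts"
  have dD: "\<bar>v r - w r\<bar> \<le> D * exp (lm * r)" if "r \<in> {0..T}" for r
  proof -
    have "e r \<le> D" using ts(2)[OF that] by (simp add: D_def)
    hence "exp (lm * r) * e r \<le> exp (lm * r) * D" by (intro mult_left_mono) auto
    thus ?thesis by (simp add: e_def exp_minus field_simps)
  qed
  have key: "e t \<le> D / 2" if t: "t \<in> {0..T}" for t
  proof -
    have t0: "0 \<le> t" using t by auto
    have sub: "{0..t} \<subseteq> {0..T}" using t by auto
    have Nint: "N0 h integrable_on {0..t}" if "continuous_on {0..T} h" for h
      by (rule integrable_continuous_interval, rule continuous_on_subset[OF N0_cont[OF that] sub])
    have "v t - w t = integral {0..t} (\<lambda>s. N0 v s - N0 w s)"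
      using fv[OF t] fw[OF t] hk_diff[OF Nint[OF v] Nint[OF w]] by simp
    also have "\<bar>\<dots>\<bar> \<le> (2 * b * K * (2 + C0 / lm) * D) * exp (lm * t) / lm"
    proof (rule int_exp_bound[OF lm(1) t0])
      show "(\<lambda>s. N0 v s - N0 w s) integrable_on {0..t}" by (intro integrable_diff Nint v w)
      fix s assume s: "s \<in> {0..t}"
      hence sT: "s \<in> {0..T}" and s0: "0 \<le> s" using t by auto
      have subs: "{0..s} \<subseteq> {0..T}" using sT by auto
      define A where "A = conv v s"
      define B where "B = conv w s"
      have AB: "\<bar>A - B\<bar> \<le> C0 * D * exp (lm * s) / lm" unfolding A_def B_def
        by (rule conv_diff[OF continuous_on_subset[OF v subs] continuous_on_subset[OF w subs] s0 lm(1)])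
           (use dD subs in auto)
      have Bb: "\<bar>B\<bar> \<le> K" unfolding B_def
        by (rule conv_abs[OF continuous_on_subset[OF w subs] s0]) (use wK subs in auto)
      have xy: "\<bar>v s - w s\<bar> \<le> D * exp (lm * s)" using dD[OF sT] .
      have P: "\<bar>M - v s\<bar> \<le> 2 * K" using vK[OF sT] K Mpos by arith
      have Q: "\<bar>w s - B\<bar> \<le> 2 * K" using wK[OF sT] Bb by arith
      have "N0 v s - N0 w s = b * ((M - v s) * (v s - A) - (M - w s) * (w s - B))"
        unfolding N0_def A_def B_def by (simp add: algebra_simps)
      hence "\<bar>N0 v s - N0 w s\<bar> = b * \<bar>(M - v s) * (v s - A) - (M - w s) * (w s - B)\<bar>"
        using bpos by (simp add: abs_mult)
      also have "\<dots> \<le> b * (2 * K * (\<bar>v s - w s\<bar> + \<bar>A - B\<bar>) + 2 * K * \<bar>v s - w s\<bar>)"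
        using alg_bound[OF P Q, of A] bpos by (intro mult_left_mono) auto
      also have "\<dots> \<le> b * (2 * K * (D * exp (lm * s) + C0 * D * exp (lm * s) / lm) + 2 * K * (D * exp (lm * s)))"
      proof -
        have "2 * K * (\<bar>v s - w s\<bar> + \<bar>A - B\<bar>) \<le> 2 * K * (D * exp (lm * s) + C0 * D * exp (lm * s) / lm)"
          using xy AB K by (intro mult_left_mono add_mono) auto
        moreover have "2 * K * \<bar>v s - w s\<bar> \<le> 2 * K * (D * exp (lm * s))" using xy K by (intro mult_left_mono) auto
        ultimately show ?thesis using bpos by (intro mult_left_mono) auto
      qed
      also have "\<dots> = 2 * b * K * (2 + C0 / lm) * D * exp (lm * s)"
        using lm by (simp add: field_simps)
      finally show "\<bar>N0 v s - N0 w s\<bar> \<le> 2 * b * K * (2 + C0 / lm) * D * exp (lm * s)" .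
    qed
    also have "\<dots> = (2 * b * K * (2 + C0 / lm) / lm) * (D * exp (lm * t))" by simp
    also have "\<dots> \<le> 1/2 * (D * exp (lm * t))"
    proof (rule mult_right_mono[OF half])
      show "0 \<le> D * exp (lm * t)" using ts(1) by (simp add: D_def e_def)
    qed
    finally have "\<bar>v t - w t\<bar> \<le> 1/2 * (D * exp (lm * t))" .
    hence "exp (- lm * t) * \<bar>v t - w t\<bar> \<le> exp (- lm * t) * (1/2 * (D * exp (lm * t)))"
      by (intro mult_left_mono) auto
    also have "\<dots> = D / 2" by (simp add: exp_minus field_simps)
    finally show ?thesis by (simp add: e_def)
  qed
  have "D \<le> D / 2" using key[OF ts(1)] by (simp add: D_def)
  hence D0: "D \<le> 0" by simp
  fix t assume t: "t \<in> {0..T}"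
  have "e t \<le> 0" using ts(2)[OF t] D0 by (simp add: D_def)
  hence "\<bar>v t - w t\<bar> \<le> 0" unfolding e_def by (simp add: mult_le_0_iff)
  thus "v t = w t" by simp
qed

end


lemma mono_lim:
  fixes f :: "real \<Rightarrow> real"
  assumes mono: "\<And>s t. 0 \<le> s \<Longrightarrow> s \<le> t \<Longrightarrow> f s \<le> f t" and bnd: "\<And>t. 0 \<le> t \<Longrightarrow> f t \<le> B"
  shows "(f \<longlongrightarrow> Sup (f ` {0..})) at_top" "Sup (f ` {0..}) \<le> B"
proof -
  have ne: "f ` {0..} \<noteq> {}" by auto
  have bdd: "bdd_above (f ` {0..})" using bnd by (auto intro!: bdd_aboveI[of _ B])
  show "Sup (f ` {0..}) \<le> B" using bnd by (intro cSup_least[OF ne]) auto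
  show "(f \<longlongrightarrow> Sup (f ` {0..})) at_top"
  proof (rule order_tendstoI)
    fix a assume "a < Sup (f ` {0..})"
    then obtain t0 where t0: "t0 \<ge> 0" "a < f t0" using less_cSup_iff[OF ne bdd] by auto
    show "eventually (\<lambda>t. a < f t) at_top"
      unfolding eventually_at_top_linorder
      by (rule exI[of _ t0]) (use t0 mono in \<open>auto intro: less_le_trans\<close>)
  next
    fix a assume a: "Sup (f ` {0..}) < a"
    show "eventually (\<lambda>t. f t < a) at_top"
      unfolding eventually_at_top_linorder
    proof (rule exI[of _ 0], intro allI impI)
      fix t :: real assume "t \<ge> 0"
      hence "f t \<le> Sup (f ` {0..})" by (intro cSup_upper[OF _ bdd]) auto
      thus "f t < a" using a by simp
    qed
  qed
qed

context SI begin

lemma Fc_Is: "0 \<le> s \<Longrightarrow> Fc Is s = Is s - conv Is s"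
  unfolding Fc_def using c_Is conv_c_Is by simp

lemma Is_formula: "0 \<le> t \<Longrightarrow> M - Is t = (M - I0) * exp (- (b * integral {0..t} (Fc Is)))"
proof -
  assume t: "0 \<le> t"
  have "M - Is t = (M - Is 0) * exp (- (b * integral {0..t} (Fc Is)))"
  proof (rule exp_sol[OF t])
    show "continuous_on {0..t} (Fc Is)" by (rule continuous_on_subset[OF Fc_cont[OF Is_cont]]) auto
    fix r assume r: "r \<in> {0..t}"
    have "(Is has_real_derivative Nf Is r) (at r within {0..t})"
      by (rule DERIV_subset[OF Is_deriv]) (use r in auto)
    hence "((\<lambda>t. M - Is t) has_real_derivative - Nf Is r) (at r within {0..t})"
      by (auto intro!: derivative_eq_intros)
    moreover have "- Nf Is r = - (b * Fc Is r * (M - Is r))" unfolding Nf_def using c_Is r by simp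
    ultimately show "((\<lambda>t. M - Is t) has_real_derivative - (b * Fc Is r * (M - Is r))) (at r within {0..t})"
      by simp
  qed
  thus ?thesis using Is_0 by simp
qed

lemma Fc_int_bound:
  assumes T: "0 \<le> T"
  shows "integral {0..T} (Fc Is) \<le> M * Kq"
proof -
  have IsT: "continuous_on {0..T} Is" by (rule Is_cont)
  have cI: "continuous_on {0..T} (conv Is)" by (rule conv_cont[OF IsT])
  have GT: "continuous_on {0..T} (\<lambda>r. G (T - r) * Is r)"
    by (intro continuous_intros Is_cont continuous_on_compose2[OF G_cont[of T]]) auto
  have h1: "integral {0..T} (Fc Is) = integral {0..T} Is - integral {0..T} (conv Is)"
    using hk_cong[of "{0..T}" "Fc Is" "\<lambda>s. Is s - conv Is s"] Fc_Is
      hk_diff[OF integrable_continuous_interval[OF IsT] integrable_continuous_interval[OF cI]]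
    by simp
  have "integral {0..T} (conv Is) = integral {0..T} (\<lambda>s. integral {0..T} (\<lambda>r. g (s - r) * Is r))"
    by (rule hk_cong) (use conv_eq[OF IsT] in auto)
  also have "\<dots> = integral (cbox 0 T) (\<lambda>s. integral (cbox 0 T) (\<lambda>r. g (s - r) * Is r))" by simp
  also have "\<dots> = integral (cbox 0 T) (\<lambda>r. integral (cbox 0 T) (\<lambda>s. g (s - r) * Is r))"
  proof (rule integral_swap_continuous)
    show "continuous_on (cbox (0, 0) (T, T)) (\<lambda>(x, y). g (x - y) * Is y)"
      unfolding case_prod_beta by (intro continuous_intros continuous_on_compose2[OF Is_cont[of UNIV]]) auto
  qed
  also have "\<dots> = integral {0..T} (\<lambda>r. integral {0..T} (\<lambda>s. g (s - r) * Is r))" by simp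
  also have "\<dots> = integral {0..T} (\<lambda>r. G (T - r) * Is r)"
  proof (rule hk_cong)
    fix r assume r: "r \<in> {0..T}"
    have "integral {0..T} (\<lambda>s. g (s - r) * Is r) = integral {0..T} (\<lambda>s. Is r * g (s - r))"
      by (simp add: mult.commute)
    also have "\<dots> = Is r * G (T - r)" using g_shift[of r T] r by simp
    finally show "integral {0..T} (\<lambda>s. g (s - r) * Is r) = G (T - r) * Is r" by simp
  qed
  finally have h3: "integral {0..T} (conv Is) = integral {0..T} (\<lambda>r. G (T - r) * Is r)" .
  have h4: "integral {0..T} Is - integral {0..T} (\<lambda>r. G (T - r) * Is r) = integral {0..T} (\<lambda>r. Is r - G (T - r) * Is r)"
    using hk_diff[OF integrable_continuous_interval[OF IsT] integrable_continuous_interval[OF GT]] by simp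
  have bc: "continuous_on {0..T} (\<lambda>r. M * Kq / (1 + (T - r))^2)"
    by (intro continuous_intros) auto
  have h5: "integral {0..T} (\<lambda>r. Is r - G (T - r) * Is r) \<le> integral {0..T} (\<lambda>r. M * Kq / (1 + (T - r))^2)"
  proof (rule integral_le)
    show "(\<lambda>r. Is r - G (T - r) * Is r) integrable_on {0..T}"
      by (intro integrable_continuous_interval continuous_intros IsT GT[unfolded])
         (intro continuous_on_compose2[OF G_cont[of T]] continuous_intros; auto)
    show "(\<lambda>r. M * Kq / (1 + (T - r))^2) integrable_on {0..T}" by (rule integrable_continuous_interval[OF bc])
    fix r assume r: "r \<in> {0..T}"
    hence r0: "0 \<le> r" "0 \<le> T - r" by auto
    have "Is r - G (T - r) * Is r = Is r * (1 - G (T - r))" by (simp add: algebra_simps)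
    also have "\<dots> \<le> M * (Kq / (1 + (T - r))^2)"
      using Is_ltM[OF r0(1)] Is_pos[OF r0(1)] G_le1[of "T - r"] G_bound[OF r0(2)] Mpos
      by (intro mult_mono) auto
    finally show "Is r - G (T - r) * Is r \<le> M * Kq / (1 + (T - r))^2" by simp
  qed
  have "((\<lambda>r. M * Kq / (1 + (T - r))^2) has_integral (M * Kq / (1 + (T - T)) - M * Kq / (1 + (T - 0)))) {0..T}"
  proof (rule fundamental_theorem_of_calculus[OF T])
    fix r assume r: "r \<in> {0..T}"
    have "((\<lambda>r. M * Kq / (1 + (T - r))) has_real_derivative M * Kq / (1 + (T - r))^2) (at r within {0..T})"
      using r by (auto intro!: derivative_eq_intros simp: power2_eq_square field_simps)
    thus "((\<lambda>r. M * Kq / (1 + (T - r))) has_vector_derivative M * Kq / (1 + (T - r))^2) (at r within {0..T})"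
      by (simp add: has_real_derivative_iff_has_vector_derivative)
  qed
  hence h6: "integral {0..T} (\<lambda>r. M * Kq / (1 + (T - r))^2) = M * Kq - M * Kq / (1 + T)"
    by (simp add: integral_unique)
  have "M * Kq / (1 + T) \<ge> 0" using Mpos C_pos T by (simp add: Kq_def)
  thus ?thesis using h1 h3 h4 h5 h6 by linarith
qed

definition "del = (M - I0) * exp (- (b * (M * Kq)))"

lemma del_pos: "del > 0" unfolding del_def using I0M by simp

lemma Is_upper: "0 \<le> t \<Longrightarrow> Is t \<le> M - del"
proof -
  assume t: "0 \<le> t"
  have "b * integral {0..t} (Fc Is) \<le> b * (M * Kq)" using Fc_int_bound[OF t] bpos by simp
  hence "exp (- (b * (M * Kq))) \<le> exp (- (b * integral {0..t} (Fc Is)))" by simp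
  hence "del \<le> M - Is t" unfolding del_def Is_formula[OF t] using I0M by (intro mult_left_mono) auto
  thus ?thesis by simp
qed

end

theorem theorem3p1:
  fixes M b S0 I0 \<mu> \<sigma> :: real
  assumes "M > 0" and "b > 0"
    and "0 < I0" and "I0 < M" and "0 < S0" and "S0 < M" and "S0 + I0 = M"
    and "\<sigma> > 0"
  shows "\<exists>S I. is_C1_solution M b (lognormal_density \<mu> \<sigma>) S0 I0 S I
           \<and> (\<forall>S2 I2. is_C1_solution M b (lognormal_density \<mu> \<sigma>) S0 I0 S2 I2 \<longrightarrow>
                   (\<forall>t\<ge>0. S2 t = S t \<and> I2 t = I t))
           \<and> (\<forall>t\<ge>0. 0 < S t \<and> S t < M \<and> 0 < I t \<and> I t < M)
           \<and> antimono_on {0..} S \<and> mono_on {0..} I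
           \<and> (\<exists>Sinf. Sinf > 0 \<and> (S \<longlongrightarrow> Sinf) at_top)
           \<and> (\<exists>Iinf. Iinf < M \<and> (I \<longlongrightarrow> Iinf) at_top)"
proof -
  interpret SI \<mu> \<sigma> M b I0
    using assms by unfold_locales auto
  define S where "S t = M - Is t" for t
  have S0: "S 0 = S0" using assms(7) Is_0 by (simp add: S_def)
  have sol: "is_C1_solution M b g S0 I0 S Is"
    unfolding is_C1_solution_def
  proof (intro conjI[OF S0] conjI[OF Is_0], rule exI[of _ "\<lambda>t. - Nf Is t"], rule exI[of _ "Nf Is"],
      intro conjI allI impI)
    show "continuous_on {0..} (\<lambda>t. - Nf Is t)" by (intro continuous_intros Nf_cont Is_cont)
    show "continuous_on {0..} (Nf Is)" by (intro Nf_cont Is_cont)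
    fix t :: real assume t: "0 \<le> t"
    show "(Is has_real_derivative Nf Is t) (at t within {0..})" by (rule Is_deriv[OF t])
    show "(S has_real_derivative - Nf Is t) (at t within {0..})"
      unfolding S_def[abs_def] by (auto intro!: derivative_eq_intros Is_deriv[OF t])
    show "Nf Is t = b * (M - Is t) * force g Is t" by (rule Nf_Is[OF t])
    show "- Nf Is t = - b * S t * force g Is t" using Nf_Is[OF t] by (simp add: S_def)
  qed
  have uniq: "\<forall>t\<ge>0. S2 t = S t \<and> I2 t = Is t" if sol2: "is_C1_solution M b g S0 I0 S2 I2" for S2 I2
  proof -
    obtain S' I' where S20: "S2 0 = S0" and I20: "I2 0 = I0"
      and dI: "\<And>t. t \<ge> 0 \<Longrightarrow> (I2 has_real_derivative I' t) (at t within {0..})"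
      and dS: "\<And>t. t \<ge> 0 \<Longrightarrow> (S2 has_real_derivative S' t) (at t within {0..})"
      and eI: "\<And>t. t \<ge> 0 \<Longrightarrow> I' t = b * (M - I2 t) * force g I2 t"
      and eS: "\<And>t. t \<ge> 0 \<Longrightarrow> S' t = - b * S2 t * force g I2 t"
      using sol2 unfolding is_C1_solution_def by metis
    have I2c: "continuous_on {0..T} I2" for T
      unfolding continuous_on_eq_continuous_within
    proof
      fix x assume x: "x \<in> {0..T}"
      have "continuous (at x within {0..}) I2" using DERIV_continuous[OF dI, of x] x by auto
      thus "continuous (at x within {0..T}) I2" by (rule continuous_within_subset) auto
    qed
    have fI2: "I2 t = I0 + integral {0..t} (N0 I2)" if t: "t \<in> {0..T}" for t T
    proof -
      have "(I' has_integral (I2 t - I2 0)) {0..t}"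
      proof (rule fundamental_theorem_of_calculus)
        show "0 \<le> t" using t by auto
        fix x assume x: "x \<in> {0..t}"
        have "(I2 has_real_derivative I' x) (at x within {0..t})"
          by (rule DERIV_subset[OF dI]) (use x in auto)
        thus "(I2 has_vector_derivative I' x) (at x within {0..t})"
          by (simp add: has_real_derivative_iff_has_vector_derivative)
      qed
      hence "integral {0..t} I' = I2 t - I0" using I20 by (simp add: integral_unique)
      moreover have "integral {0..t} I' = integral {0..t} (N0 I2)"
        by (rule hk_cong) (auto simp: eI N0_def force_def conv_def)
      ultimately show ?thesis by simp
    qed
    have fIs: "Is t = I0 + integral {0..t} (N0 Is)" if t: "t \<in> {0..T}" for t T
    proof -
      have "integral {0..t} (Nf Is) = integral {0..t} (N0 Is)"
        by (rule hk_cong) (auto simp: Nf_Is N0_def force_def conv_def)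
      thus ?thesis using Is_fix[of t] t by (simp add: Phi_def)
    qed
    have II: "I2 t = Is t" if t: "0 \<le> t" for t
    proof -
      have a: "\<And>s. s \<in> {0..t} \<Longrightarrow> I2 s = I0 + integral {0..s} (N0 I2)" by (rule fI2)
      have b: "\<And>s. s \<in> {0..t} \<Longrightarrow> Is s = I0 + integral {0..s} (N0 Is)" by (rule fIs)
      show ?thesis using uniq_I[OF t I2c Is_cont a b, of t] t by simp
    qed
    have fc: "force g I2 r = Fc Is r" if r: "0 \<le> r" for r
    proof -
      have "force g I2 r = force g Is r" unfolding force_def
        using II r by (auto intro!: hk_cong)
      thus ?thesis using Fc_force[OF r] by simp
    qed
    have SS: "S2 t = S t" if t: "0 \<le> t" for t
    proof -
      have "S2 t - S t = (S2 0 - S 0) * exp (- (b * integral {0..t} (Fc Is)))"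
      proof (rule exp_sol[OF t, where y = "\<lambda>t. S2 t - S t"])
        show "continuous_on {0..t} (Fc Is)" by (rule continuous_on_subset[OF Fc_cont[OF Is_cont]]) auto
        fix r assume r: "r \<in> {0..t}"
        hence r0: "0 \<le> r" by auto
        have dSs: "(S has_real_derivative - Nf Is r) (at r within {0..})"
          using DERIV_diff[OF DERIV_const Is_deriv[OF r0], of M] unfolding S_def[abs_def] by simp
        have "((\<lambda>t. S2 t - S t) has_real_derivative S' r - (- Nf Is r)) (at r within {0..})"
          by (rule DERIV_diff[OF dS[OF r0] dSs])
        moreover have "S' r - (- Nf Is r) = - (b * Fc Is r * (S2 r - S r))"
          using eS[OF r0] Nf_Is[OF r0] fc[OF r0] Fc_force[OF r0] by (simp add: S_def algebra_simps)
        ultimately show "((\<lambda>t. S2 t - S t) has_real_derivative - (b * Fc Is r * (S2 r - S r))) (at r within {0..t})"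
          by (auto intro: DERIV_subset)
      qed
      thus ?thesis using S20 S0 by simp
    qed
    show ?thesis using II SS by auto
  qed
  obtain Iinf where Iinf: "(Is \<longlongrightarrow> Iinf) at_top" "Iinf \<le> M - del"
    using mono_lim[of Is "M - del"] Is_mono Is_upper by blast
  have P1: "\<forall>S2 I2. is_C1_solution M b g S0 I0 S2 I2 \<longrightarrow> (\<forall>t\<ge>0. S2 t = S t \<and> I2 t = Is t)"
    using uniq by blast
  have P2: "\<forall>t\<ge>0. 0 < S t \<and> S t < M \<and> 0 < Is t \<and> Is t < M"
    using Is_pos Is_ltM by (auto simp: S_def)
  have P3: "mono_on {0..} Is" by (rule mono_onI) (auto intro: Is_mono)
  have P4: "antimono_on {0..} S" unfolding monotone_on_def S_def by (auto intro: Is_mono)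
  have P5: "\<exists>Iinf. Iinf < M \<and> (Is \<longlongrightarrow> Iinf) at_top" using Iinf del_pos by (intro exI[of _ Iinf]) auto
  have "(S \<longlongrightarrow> M - Iinf) at_top" unfolding S_def[abs_def] by (intro tendsto_intros Iinf(1))
  hence P6: "\<exists>Sinf. Sinf > 0 \<and> (S \<longlongrightarrow> Sinf) at_top" using Iinf del_pos by (intro exI[of _ "M - Iinf"]) auto
  show ?thesis using sol P1 P2 P3 P4 P5 P6 by blast
qed


end
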